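(* Let $q$ be a prime power and let $n$ and $d$ be odd integers satisfying $1\le d\le n$. Let $\operatorname{Tr}:\mathbb{F}_{q^{2n}}\to\mathbb{F}_{q^2}$, $\operatorname{Tr}(x)=\sum_{k=0}^{n-1}x^{q^{2k}}$. For $a_0\in\mathbb{F}_{q^n}$ and $a_1,\dots,a_{(n-d)/2}\in\mathbb{F}_{q^{2n}}$ define \[ H(x,y)=\operatorname{Tr}\bigg(a_0xy^{q^n}+\sum_{j=1}^{(n-d)/2}\big(a_jxy^{q^{n-2j}}+(a_j)^qx^{q^{n-2j+1}}y^q\big)\bigg),\qquad x,y\in\mathbb{F}_{q^{2n}}. \] Then, as $a_0$ ranges over $\mathbb{F}_{q^n}$ and $a_1,\dots,a_{(n-d)/2}$ range over $\mathbb{F}_{q^{2n}}$, these mappings $H$ are Hermitian forms on $\mathbb{F}_{q^{2n}}$ (viewed as an $n$-dimensional vector space over $\mathbb{F}_{q^2}$) and, identified with matrices in $X(n,q)$, they form an additive $d$-code in $X(n,q)$ of size $q^{n(n-d+1)}$.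
   Context: $X(n,q)$ is the set of $n\times n$ Hermitian matrices over $\mathbb{F}_{q^2}$ (matrices $A$ with $A^*=A$, where $A^*$ is the transpose of the matrix obtained by applying $x\mapsto x^q$ to each entry). A Hermitian form on an $n$-dimensional $\mathbb{F}_{q^2}$-vector space $V$ is a map $H:V\times V\to\mathbb{F}_{q^2}$ that is $\mathbb{F}_{q^2}$-linear in the first argument and satisfies $H(y,x)=H(x,y)^q$. Fixing a basis $\xi_1,\dots,\xi_n$ of $V$, $H$ is identified with the Hermitian matrix $(H(\xi_i,\xi_j))_{i,j}$; this is a bijection between Hermitian forms and $X(n,q)$, and the matrix rank equals $n-\dim\{x\in V:H(x,y)=0\ \forall y\}$. $\mathbb{F}_{q^n}$ is regarded as the subfield of $\mathbb{F}_{q^{2n}}$ of that order. A nonempty subset $Y\subseteq X(n,q)$ is a $d$-code if $\operatorname{rank}(A-B)\ge d$ for all distinct $A,B\in Y$; it is additive if it is a subgroup of $(X(n,q),+)$. *)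

theory Defs
  imports "HOL-Computational_Algebra.Primes" "Jordan_Normal_Form.DL_Rank"
begin

text \<open>The ambient field is a finite field type 'a of order q^(2n), i.e. F_{q^{2n}}.
  Its subfields F_{q^2} and F_{q^n} are the fixed points of the corresponding Frobenius powers.\<close>

definition subfield_of_order :: "nat \<Rightarrow> 'a::field set" where
  "subfield_of_order m = {x. x ^ m = x}"

definition prime_power :: "nat \<Rightarrow> bool" where
  "prime_power q \<longleftrightarrow> (\<exists>p e. prime p \<and> e \<ge> 1 \<and> q = p ^ e)"

definition Tr :: "nat \<Rightarrow> nat \<Rightarrow> 'a::field \<Rightarrow> 'a" where
  "Tr q n x = (\<Sum>k<n. x ^ (q ^ (2 * k)))"

definition Hform :: "nat \<Rightarrow> nat \<Rightarrow> nat \<Rightarrow> (nat \<Rightarrow> 'a::field) \<Rightarrow> 'a \<Rightarrow> 'a \<Rightarrow> 'a" where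
  "Hform q n d a x y = Tr q n (a 0 * x * y ^ (q ^ n)
      + (\<Sum>j\<in>{1..(n - d) div 2}. a j * x * y ^ (q ^ (n - 2 * j))
                                 + (a j) ^ q * x ^ (q ^ (n - 2 * j + 1)) * y ^ q))"

definition hermitian_form :: "nat \<Rightarrow> ('a::field \<Rightarrow> 'a \<Rightarrow> 'a) \<Rightarrow> bool" where
  "hermitian_form q H \<longleftrightarrow>
     (\<forall>x y. H x y \<in> subfield_of_order (q ^ 2)) \<and>
     (\<forall>x x' y. H (x + x') y = H x y + H x' y) \<and>
     (\<forall>c \<in> subfield_of_order (q ^ 2). \<forall>x y. H (c * x) y = c * H x y) \<and>
     (\<forall>x y. H y x = (H x y) ^ q)"

definition is_basis :: "nat \<Rightarrow> nat \<Rightarrow> (nat \<Rightarrow> 'a::field) \<Rightarrow> bool" where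
  "is_basis q n \<xi> \<longleftrightarrow>
     (\<forall>x. \<exists>!c. (\<forall>i<n. c i \<in> subfield_of_order (q ^ 2)) \<and> (\<forall>i\<ge>n. c i = 0) \<and>
              x = (\<Sum>i<n. c i * \<xi> i))"

definition form_matrix :: "nat \<Rightarrow> (nat \<Rightarrow> 'a) \<Rightarrow> ('a \<Rightarrow> 'a \<Rightarrow> 'a) \<Rightarrow> 'a mat" where
  "form_matrix n \<xi> H = mat n n (\<lambda>(i, j). H (\<xi> i) (\<xi> j))"

definition hermitian_mats :: "nat \<Rightarrow> nat \<Rightarrow> 'a::field mat set" where
  "hermitian_mats n q = {A. A \<in> carrier_mat n n \<and>
      (\<forall>i<n. \<forall>j<n. A $$ (i, j) \<in> subfield_of_order (q ^ 2) \<and> A $$ (j, i) = (A $$ (i, j)) ^ q)}"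

text \<open>Matrix rank (rank is invariant under field extension, so rank over the ambient field
  equals rank over F_{q^2} for matrices with entries in F_{q^2}).\<close>
definition mrank :: "nat \<Rightarrow> 'a::field mat \<Rightarrow> nat" where
  "mrank n A = vec_space.rank n A"

definition d_code :: "nat \<Rightarrow> nat \<Rightarrow> nat \<Rightarrow> 'a::field mat set \<Rightarrow> bool" where
  "d_code n q d Y \<longleftrightarrow> Y \<noteq> {} \<and> Y \<subseteq> hermitian_mats n q \<and>
     (\<forall>A\<in>Y. \<forall>B\<in>Y. A \<noteq> B \<longrightarrow> mrank n (A - B) \<ge> d)"

definition additive_code :: "nat \<Rightarrow> 'a::field mat set \<Rightarrow> bool" where
  "additive_code n Y \<longleftrightarrow> 0\<^sub>m n n \<in> Y \<and> (\<forall>A\<in>Y. \<forall>B\<in>Y. A + B \<in> Y) \<and> (\<forall>A\<in>Y. - A \<in> Y)"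

end

theory Submission
  imports Defs "HOL-Number_Theory.Residues"
begin


lemma ff_power_card:
  fixes x :: "'a::{field,finite}"
  shows "x ^ card (UNIV :: 'a set) = x"
proof (cases "x = 0")
  case False
  have "x * (\<Prod>y\<in>UNIV-{0}. x * y) = x * x ^ (card (UNIV :: 'a set) - 1) * \<Prod>(UNIV-{0})"
    by (simp add: prod.distrib mult_ac)
  also have "x * x ^ (card (UNIV :: 'a set) - 1) = x ^ Suc (card (UNIV :: 'a set) - 1)"
    by (subst power_Suc) auto
  also have "Suc (card (UNIV :: 'a set) - 1) = card (UNIV :: 'a set)"
    using finite_UNIV_card_ge_0[where ?'a = 'a] by simp
  also have "(\<Prod>y\<in>UNIV-{0}. x * y) = (\<Prod>y\<in>UNIV-{0}. y)"
    by (rule prod.reindex_bij_witness[of _ "\<lambda>y. y / x" "\<lambda>y. x * y"]) (use False in auto)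
  finally show ?thesis
    by simp
qed (use finite_UNIV_card_ge_0[where ?'a = 'a] in auto)

locale ffq =
  fixes q n :: nat and ty :: "'a::{field,finite} itself"
  assumes pp: "prime_power q" and card_a: "card (UNIV::'a set) = q^(2*n)" and npos: "n \<ge> 1"
begin

lemma pow_card: "(x::'a) ^ (q^(2*n)) = x"
  using ff_power_card[of x] card_a by simp

lemma char_q: "prime CHAR('a) \<and> (\<exists>e. q = CHAR('a) ^ e) \<and> q \<ge> 2"
proof -
  obtain p e where p: "prime p" "e \<ge> 1" "q = p ^ e" using pp unfolding prime_power_def by blast
  have fin: "finite (UNIV::'a set)" by simp
  have cp: "CHAR('a) > 0" using finite_imp_CHAR_pos[OF fin] by simp
  have pc: "prime CHAR('a)" using prime_CHAR_semidom[OF cp] .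
  have "CHAR('a) dvd card (UNIV::'a set)" by (rule CHAR_dvd_CARD)
  also have "card (UNIV::'a set) = p ^ (e * (2*n))" using card_a p(3) by (simp add: power_mult)
  finally have "CHAR('a) dvd p" using pc prime_dvd_power by metis
  hence cp: "CHAR('a) = p" using pc p(1) primes_dvd_imp_eq by blast
  have "p ^ 1 \<le> p ^ e" using p(2) prime_gt_0_nat[OF p(1)] by (intro power_increasing) auto
  hence "q \<ge> 2" using p prime_ge_2_nat[OF p(1)] by simp
  thus ?thesis using p pc cp by blast
qed

lemma q_ge2: "q \<ge> 2" using char_q by blast

lemma frob_add: "((x::'a) + y) ^ (q^k) = x ^ (q^k) + y ^ (q^k)"
proof -
  obtain e where e: "q = CHAR('a) ^ e" using char_q by blast
  show ?thesis by (rule freshmans_dream'[where n = "e*k"]) (use char_q e in \<open>auto simp: power_mult\<close>)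
qed

lemma frob_sum: "(sum (f :: 'b \<Rightarrow> 'a) A) ^ (q^k) = sum (\<lambda>i. f i ^ (q^k)) A"
proof -
  obtain e where e: "q = CHAR('a) ^ e" using char_q by blast
  show ?thesis by (rule freshmans_dream_sum'[where n = "e*k"]) (use char_q e in \<open>auto simp: power_mult\<close>)
qed

lemma frob_diff: "((x::'a) - y) ^ (q^k) = x ^ (q^k) - y ^ (q^k)"
  using frob_add[of "x - y" y k] by (simp add: algebra_simps)

lemma frob_neg: "(- (x::'a)) ^ (q^k) = - (x ^ (q^k))"
  using frob_diff[of 0 x k] q_ge2 by simp

lemma pow_pow: "((x::'a) ^ (q^a)) ^ (q^b) = x ^ (q^(a+b))"
  by (simp add: power_mult[symmetric] power_add)

lemma frob_period: "(x::'a) ^ (q^(k + 2*n)) = x ^ (q^k)"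
proof -
  have "x ^ (q^(k + 2*n)) = (x ^ (q^(2*n))) ^ (q^k)"
    by (simp add: power_mult[symmetric] power_add mult.commute)
  thus ?thesis by (simp add: pow_card)
qed

lemma pow_q0: "(x::'a) ^ (q^0) = x" by simp

abbreviation T where "T \<equiv> (Tr q n :: 'a \<Rightarrow> 'a)"

lemma Tr_add: "T (x + y) = T x + T y"
  unfolding Tr_def by (simp add: frob_add sum.distrib)

lemma Tr_sum: "T (sum f A) = sum (\<lambda>i. T (f i)) A"
  unfolding Tr_def by (simp add: frob_sum sum.swap[of _ A])

lemma Tr_diff: "T (x - y) = T x - T y"
  unfolding Tr_def by (simp add: frob_diff sum_subtractf)

lemma Tr_neg: "T (- x) = - T x"
  unfolding Tr_def by (simp add: frob_neg sum_negf)

lemma Tr_zero: "T 0 = 0"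
  unfolding Tr_def using q_ge2 by simp

lemma Tr_frob2: "T (x ^ (q^2)) = T x"
proof -
  obtain m where m: "n = Suc m" using npos by (cases n) auto
  have "T (x ^ (q^2)) = (\<Sum>k<n. x ^ (q^(2*Suc k)))"
    unfolding Tr_def by (simp add: pow_pow add.commute)
  also have "\<dots> = (\<Sum>k<m. x ^ (q^(2*Suc k))) + x ^ (q^(2*n))"
    by (simp add: m)
  also have "x ^ (q^(2*n)) = x ^ (q^(2*0))" by (simp add: pow_card)
  also have "(\<Sum>k<m. x ^ (q^(2*Suc k))) + x ^ (q^(2*0)) = (\<Sum>k<Suc m. x ^ (q^(2*k)))"
    by (subst sum.lessThan_Suc_shift) simp
  finally show ?thesis unfolding Tr_def m .
qed

lemma Tr_frob_even: "T (x ^ (q^(2*m))) = T x"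
proof (induction m)
  case (Suc m)
  have "x ^ (q^(2*Suc m)) = (x ^ (q^(2*m))) ^ (q^2)" by (simp add: pow_pow)
  thus ?case using Tr_frob2 Suc by simp
qed simp

lemma Tr_pow_q: "(T x) ^ (q^k) = T (x ^ (q^k))"
  unfolding Tr_def by (simp add: frob_sum pow_pow add.commute)

lemma K_pow_even: "(c::'a) ^ (q^2) = c \<Longrightarrow> c ^ (q^(2*m)) = c"
proof (induction m)
  case (Suc m)
  have "c ^ (q^(2*Suc m)) = (c ^ (q^(2*m))) ^ (q^2)" by (simp add: pow_pow)
  thus ?case using Suc by simp
qed simp

lemma Tr_in_K: "(T x) ^ (q^2) = T x"
  using Tr_pow_q[of x 2] Tr_frob2 by simp

lemma Tr_Klin: "(c::'a) ^ (q^2) = c \<Longrightarrow> T (c * x) = c * T x"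
  unfolding Tr_def by (simp add: sum_distrib_left K_pow_even power_mult_distrib)

end


lemma fiber_count:
  assumes fin: "finite A"
    and sub_in: "\<And>u v. u \<in> A \<Longrightarrow> v \<in> A \<Longrightarrow> sub u v \<in> A"
    and ker: "\<And>u v. u \<in> A \<Longrightarrow> v \<in> A \<Longrightarrow> f u = f v \<Longrightarrow> f (sub u v) = z"
    and inj: "\<And>u u' v. u \<in> A \<Longrightarrow> u' \<in> A \<Longrightarrow> v \<in> A \<Longrightarrow> sub u v = sub u' v \<Longrightarrow> u = u'"
  shows "card A \<le> card (f ` A) * card {x\<in>A. f x = z}"
proof -
  have "A = (\<Union>w\<in>f ` A. {u\<in>A. f u = w})" by auto
  hence "card A \<le> (\<Sum>w\<in>f ` A. card {u\<in>A. f u = w})"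
    by (metis card_UN_le fin finite_imageI)
  also have "\<dots> \<le> (\<Sum>w\<in>f ` A. card {x\<in>A. f x = z})"
  proof (rule sum_mono)
    fix w assume "w \<in> f ` A"
    then obtain v where v: "v \<in> A" "f v = w" by auto
    have "inj_on (\<lambda>u. sub u v) {u\<in>A. f u = w}" using inj v by (auto simp: inj_on_def)
    moreover have "(\<lambda>u. sub u v) ` {u\<in>A. f u = w} \<subseteq> {x\<in>A. f x = z}" using sub_in ker v by auto
    moreover have "finite {x\<in>A. f x = z}" using fin by simp
    ultimately show "card {u\<in>A. f u = w} \<le> card {x\<in>A. f x = z}"
      by (rule card_inj_on_le)
  qed
  also have "\<dots> = card (f ` A) * card {x\<in>A. f x = z}" by simp
  finally show ?thesis .
qed

context ffq begin

lemma q_pow_inj: "q ^ a = q ^ b \<longleftrightarrow> a = b"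
  using q_ge2 by (simp add: power_inject_exp)

lemma roots_bound:
  fixes c :: "nat \<Rightarrow> 'a" and E :: "nat \<Rightarrow> nat"
  assumes fin: "finite I" and inj: "inj_on E I" and kz: "kz \<in> I" "c kz \<noteq> 0"
    and bnd: "\<And>k. k \<in> I \<Longrightarrow> E k \<le> D"
  shows "card {y. (\<Sum>k\<in>I. c k * y ^ (q ^ E k)) = 0} \<le> q ^ D"
proof -
  define p where "p = (\<Sum>k\<in>I. Polynomial.monom (c k) (q ^ E k))"
  have pe: "poly p y = (\<Sum>k\<in>I. c k * y ^ (q ^ E k))" for y
    unfolding p_def by (simp add: poly_sum poly_monom)
  have "Polynomial.coeff p (q ^ E kz) = (\<Sum>k\<in>I. if q ^ E k = q ^ E kz then c k else 0)"
    unfolding p_def by (simp add: Polynomial.coeff_sum)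
  also have "\<dots> = (\<Sum>k\<in>I. if k = kz then c k else 0)"
  proof (rule sum.cong[OF refl])
    fix k assume "k \<in> I"
    hence "q ^ E k = q ^ E kz \<longleftrightarrow> k = kz" using inj kz q_pow_inj by (auto simp: inj_on_def)
    thus "(if q ^ E k = q ^ E kz then c k else 0) = (if k = kz then c k else 0)" by simp
  qed
  also have "\<dots> = c kz" using fin kz by simp
  finally have "p \<noteq> 0" using kz by auto
  moreover have "degree p \<le> q ^ D"
    unfolding p_def
  proof (rule degree_sum_le[OF fin])
    fix k assume "k \<in> I"
    have "degree (Polynomial.monom (c k) (q ^ E k)) \<le> q ^ E k" by (rule degree_monom_le)
    also have "\<dots> \<le> q ^ D" using bnd[OF \<open>k \<in> I\<close>] q_ge2 by (intro power_increasing) auto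
    finally show "degree (Polynomial.monom (c k) (q ^ E k)) \<le> q ^ D" .
  qed
  ultimately have "card {y. poly p y = 0} \<le> q ^ D" using card_poly_roots_bound le_trans by blast
  thus ?thesis using pe by simp
qed

lemma Tr_nonzero: "\<exists>z. T z \<noteq> 0"
proof (rule ccontr)
  assume "\<not> (\<exists>z. T z \<noteq> 0)"
  hence all0: "\<And>z. T z = 0" by blast
  have all: "{y. (\<Sum>k\<in>{..<n}. 1 * y ^ (q ^ (2*k))) = (0::'a)} = UNIV"
    using all0[unfolded Tr_def] by (simp add: set_eq_iff)
  have "card {y. (\<Sum>k\<in>{..<n}. 1 * y ^ (q ^ (2*k))) = (0::'a)} \<le> q ^ (2*(n-1))"
    by (rule roots_bound[where kz=0]) (use npos in \<open>auto simp: inj_on_def\<close>)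
  also have "\<dots> < q ^ (2*n)" using q_ge2 npos by (intro power_strict_increasing) auto
  finally show False using all card_a by simp
qed

lemma Tr_nondeg: assumes "\<And>x. T (x * w) = 0" shows "w = 0"
proof (rule ccontr)
  assume w: "w \<noteq> 0"
  obtain z where z: "T z \<noteq> 0" using Tr_nonzero by blast
  have "T ((z / w) * w) = 0" by (rule assms)
  thus False using w z by simp
qed

lemma card_subfield:
  assumes km: "k * m = 2 * n" and k: "k \<ge> 1"
  shows "card {x::'a. x ^ (q ^ k) = x} = q ^ k"
proof (rule antisym)
  have "{x::'a. x ^ (q ^ k) = x} = {y. (\<Sum>i\<in>{0::nat,1}. (if i = 0 then 1 else -1) * y ^ (q ^ (if i = 0 then k else 0))) = 0}"
    by auto
  also have "card \<dots> \<le> q ^ k"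
    by (rule roots_bound[where kz=0]) (use k in \<open>auto simp: inj_on_def\<close>)
  finally show "card {x::'a. x ^ (q ^ k) = x} \<le> q ^ k" .
next
  have m: "m \<ge> 1" using km npos by (cases m) auto
  define f where "f = (\<lambda>x::'a. x ^ (q ^ k) - x)"
  have "card (UNIV::'a set) \<le> card (f ` UNIV) * card {x\<in>UNIV. f x = 0}"
  proof (rule fiber_count[where sub = minus])
    fix u v :: 'a assume "f u = f v"
    have "f (u - v) = f u - f v" by (simp add: f_def frob_diff algebra_simps)
    thus "f (u - v) = 0" using \<open>f u = f v\<close> by simp
  qed auto
  also have "{x\<in>UNIV. f x = 0} = {x::'a. x ^ (q ^ k) = x}" by (auto simp: f_def)
  finally have c1: "q ^ (2*n) \<le> card (f ` UNIV) * card {x::'a. x ^ (q ^ k) = x}" using card_a by simp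
  have img: "f ` UNIV \<subseteq> {y. (\<Sum>i\<in>{..<m}. 1 * y ^ (q ^ (k*i))) = 0}"
  proof clarify
    fix x :: 'a
    have "(\<Sum>i\<in>{..<m}. 1 * f x ^ (q ^ (k*i))) = (\<Sum>i<m. x ^ (q ^ (k * Suc i)) - x ^ (q ^ (k*i)))"
      by (simp add: f_def frob_diff pow_pow)
    also have "\<dots> = x ^ (q ^ (k * m)) - x ^ (q ^ (k * 0))" by (rule sum_lessThan_telescope)
    also have "\<dots> = 0" using km pow_card by simp
    finally show "(\<Sum>i\<in>{..<m}. 1 * f x ^ (q ^ (k*i))) = 0" .
  qed
  have "card (f ` UNIV) \<le> card {y. (\<Sum>i\<in>{..<m}. 1 * y ^ (q ^ (k*i))) = (0::'a)}"
    by (rule card_mono[OF _ img]) simp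
  also have "\<dots> \<le> q ^ (k * (m - 1))"
    by (rule roots_bound[where kz=0]) (use m k in \<open>auto simp: inj_on_def\<close>)
  finally have c2: "card (f ` UNIV) \<le> q ^ (k * (m - 1))" .
  have eq: "q ^ (2*n) = q ^ (k * (m - 1)) * q ^ k"
  proof -
    have "k * (m - 1) + k = 2*n" using km m by (cases m) auto
    thus ?thesis by (metis power_add)
  qed
  have cpos: "card (f ` UNIV) > 0" by (rule card_gt_0_iff[THEN iffD2]) simp
  show "q ^ k \<le> card {x::'a. x ^ (q ^ k) = x}"
  proof (rule ccontr)
    assume "\<not> ?thesis"
    hence "card {x::'a. x ^ (q ^ k) = x} < q ^ k" by simp
    hence "card (f ` UNIV) * card {x::'a. x ^ (q ^ k) = x} < q ^ (k * (m - 1)) * q ^ k"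
      using c2 q_ge2 cpos by (intro mult_le_less_imp_less) auto
    thus False using c1 eq by simp
  qed
qed

end


locale ffd = ffq q n ty for q n :: nat and ty :: "'a::{field,finite} itself" +
  fixes d :: nat
  assumes n_odd: "odd n" and d_odd: "odd d" and d1: "1 \<le> d" and dn: "d \<le> n"
begin

definition J where "J = (n - d) div 2"
definition N where "N = (n - 1) div 2"

lemma nN: "n = 2 * N + 1" using n_odd unfolding N_def by presburger
lemma dJ: "n - d = 2 * J" using n_odd d_odd dn unfolding J_def by presburger
lemma JN: "J \<le> N" using dJ nN d1 by linarith

lemma ppq: "((x::'a) ^ (q ^ a)) ^ q = x ^ (q ^ Suc a)"
  using pow_pow[of x a 1] by simp
lemma pqp: "((x::'a) ^ q) ^ (q ^ b) = x ^ (q ^ Suc b)"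
  using pow_pow[of x 1 b] by simp
lemma pqq: "((x::'a) ^ q) ^ q = x ^ (q ^ 2)"
  using pow_pow[of x 1 1] by (simp add: numeral_2_eq_2)
lemma pexp: "e = k + 2 * n \<Longrightarrow> (x::'a) ^ (q ^ e) = x ^ (q ^ k)"
  using frob_period by simp
lemma pexp2: "e = 2 * n \<Longrightarrow> (x::'a) ^ (q ^ e) = x"
  using pow_card by simp

definition inner :: "(nat \<Rightarrow> 'a) \<Rightarrow> 'a \<Rightarrow> 'a \<Rightarrow> 'a" where
  "inner a x y = a 0 * x * y ^ (q ^ n)
      + (\<Sum>j\<in>{1..J}. a j * x * y ^ (q ^ (n - 2 * j)) + (a j) ^ q * x ^ (q ^ (n - 2 * j + 1)) * y ^ q)"

lemma H_inner: "Hform q n d a x y = T (inner a x y)"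
  unfolding Hform_def inner_def J_def by simp

definition g :: "(nat \<Rightarrow> 'a) \<Rightarrow> 'a \<Rightarrow> 'a" where
  "g a y = a 0 * y ^ (q ^ n)
      + (\<Sum>j\<in>{1..J}. a j * y ^ (q ^ (n - 2 * j)) + (a j) ^ (q ^ (n + 2 * j)) * y ^ (q ^ (n + 2 * j)))"

lemma termB:
  assumes j: "j \<le> J"
  shows "T (b ^ q * x ^ (q ^ (n - 2 * j + 1)) * y ^ q) = T (x * (b ^ (q ^ (n + 2 * j)) * y ^ (q ^ (n + 2 * j))))"
proof -
  let ?m = "N + j"
  have "T (b ^ q * x ^ (q ^ (n - 2 * j + 1)) * y ^ q) = T ((b ^ q * x ^ (q ^ (n - 2 * j + 1)) * y ^ q) ^ (q ^ (2 * ?m)))"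
    by (rule Tr_frob_even[symmetric])
  also have "(b ^ q * x ^ (q ^ (n - 2 * j + 1)) * y ^ q) ^ (q ^ (2 * ?m))
      = b ^ (q ^ Suc (2 * ?m)) * x ^ (q ^ (n - 2 * j + 1 + 2 * ?m)) * y ^ (q ^ Suc (2 * ?m))"
    by (simp only: power_mult_distrib pqp pow_pow)
  also have "Suc (2 * ?m) = n + 2 * j" using nN by simp
  also have "x ^ (q ^ (n - 2 * j + 1 + 2 * ?m)) = x" using nN j JN by (intro pexp2) simp
  finally show ?thesis by (simp add: mult_ac)
qed

lemma H_g: "Hform q n d a x y = T (x * g a y)"
proof -
  have "T (inner a x y) = T (a 0 * x * y ^ (q ^ n))
      + (\<Sum>j\<in>{1..J}. T (a j * x * y ^ (q ^ (n - 2 * j))) + T ((a j) ^ q * x ^ (q ^ (n - 2 * j + 1)) * y ^ q))"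
    unfolding inner_def by (simp add: Tr_add Tr_sum)
  also have "\<dots> = T (x * (a 0 * y ^ (q ^ n)))
      + (\<Sum>j\<in>{1..J}. T (x * (a j * y ^ (q ^ (n - 2 * j)))) + T (x * ((a j) ^ (q ^ (n + 2 * j)) * y ^ (q ^ (n + 2 * j)))))"
  proof -
    have e0: "T (a 0 * x * y ^ (q ^ n)) = T (x * (a 0 * y ^ (q ^ n)))" by (simp only: mult_ac)
    have es: "(\<Sum>j\<in>{1..J}. T (a j * x * y ^ (q ^ (n - 2 * j))) + T ((a j) ^ q * x ^ (q ^ (n - 2 * j + 1)) * y ^ q))
      = (\<Sum>j\<in>{1..J}. T (x * (a j * y ^ (q ^ (n - 2 * j)))) + T (x * ((a j) ^ (q ^ (n + 2 * j)) * y ^ (q ^ (n + 2 * j)))))"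
    proof (rule sum.cong[OF refl])
      fix j assume "j \<in> {1..J}"
      hence jJ: "j \<le> J" by simp
      have e1: "a j * x * y ^ (q ^ (n - 2 * j)) = x * (a j * y ^ (q ^ (n - 2 * j)))" by (simp only: mult_ac)
      show "T (a j * x * y ^ (q ^ (n - 2 * j))) + T ((a j) ^ q * x ^ (q ^ (n - 2 * j + 1)) * y ^ q)
          = T (x * (a j * y ^ (q ^ (n - 2 * j)))) + T (x * ((a j) ^ (q ^ (n + 2 * j)) * y ^ (q ^ (n + 2 * j))))"
        by (simp only: e1 termB[OF jJ])
    qed
    show ?thesis by (simp only: e0 es)
  qed
  also have "\<dots> = T (x * g a y)"
    unfolding g_def by (simp add: Tr_add Tr_sum distrib_left sum_distrib_left)
  finally show ?thesis using H_inner by simp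
qed

lemma K_frob: "(c::'a) ^ (q^2) = c \<Longrightarrow> c ^ (q ^ (2 * m + 1)) = c ^ q"
proof -
  assume c: "c ^ (q^2) = c"
  have "c ^ (q ^ (2 * m + 1)) = (c ^ (q ^ (2 * m))) ^ q" by (simp add: ppq)
  thus ?thesis using K_pow_even[OF c] by simp
qed

lemma H_add_left: fixes a :: "nat \<Rightarrow> 'a" shows "Hform q n d a (x + x') y = Hform q n d a x y + Hform q n d a x' y"
proof -
  have "inner a (x + x') y = inner a x y + inner a x' y"
    unfolding inner_def
    by (simp only: frob_add) (simp add: algebra_simps sum.distrib)
  thus ?thesis by (simp add: H_inner Tr_add)
qed

lemma H_smult_left:
  fixes a :: "nat \<Rightarrow> 'a"
  assumes c: "c ^ (q^2) = c"
  shows "Hform q n d a (c * x) y = c * Hform q n d a x y"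
proof -
  have es: "(\<Sum>j\<in>{1..J}. a j * (c * x) * y ^ (q ^ (n - 2 * j)) + (a j) ^ q * (c * x) ^ (q ^ (n - 2 * j + 1)) * y ^ q)
     = (\<Sum>j\<in>{1..J}. c * (a j * x * y ^ (q ^ (n - 2 * j)) + (a j) ^ q * x ^ (q ^ (n - 2 * j + 1)) * y ^ q))"
  proof (rule sum.cong[OF refl])
    fix j assume j: "j \<in> {1..J}"
    have "n - 2 * j + 1 = 2 * (N - j + 1)" using nN j JN by auto
    hence cc: "c ^ (q ^ (n - 2 * j + 1)) = c" using K_pow_even[OF c] by metis
    have "(c * x) ^ (q ^ (n - 2 * j + 1)) = c * x ^ (q ^ (n - 2 * j + 1))"
      by (simp only: power_mult_distrib cc)
    thus "a j * (c * x) * y ^ (q ^ (n - 2 * j)) + (a j) ^ q * (c * x) ^ (q ^ (n - 2 * j + 1)) * y ^ q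
        = c * (a j * x * y ^ (q ^ (n - 2 * j)) + (a j) ^ q * x ^ (q ^ (n - 2 * j + 1)) * y ^ q)"
      by (simp only: algebra_simps)
  qed
  have "inner a (c * x) y = c * inner a x y"
    unfolding inner_def es by (simp add: distrib_left sum_distrib_left[symmetric] mult_ac)
  thus ?thesis by (simp add: H_inner Tr_Klin[OF c])
qed

lemma H_in_K: fixes a :: "nat \<Rightarrow> 'a" shows "(Hform q n d a x y) ^ (q^2) = Hform q n d a x y"
  by (simp add: H_inner Tr_in_K)

end


context ffd begin

lemma fa1: "((u::'a) + v) ^ q = u ^ q + v ^ q" using frob_add[of u v 1] by simp
lemma fd1: "((u::'a) - v) ^ q = u ^ q - v ^ q" using frob_diff[of u v 1] by simp
lemma fn1: "(- (u::'a)) ^ q = - (u ^ q)" using frob_neg[of u 1] by simp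
lemma fs1: "(sum (f::nat \<Rightarrow> 'a) A) ^ q = (\<Sum>i\<in>A. f i ^ q)" using frob_sum[of f A 1] by simp
lemma Tq: "(T (x::'a)) ^ q = T (x ^ q)" using Tr_pow_q[of x 1] by simp

lemma s0:
  assumes a: "(a::'a) ^ (q ^ n) = a"
  shows "T ((a * x * y ^ (q ^ n)) ^ q) = T (a * y * x ^ (q ^ n))"
proof -
  have "T ((a * x * y ^ (q ^ n)) ^ q) = T (((a * x * y ^ (q ^ n)) ^ q) ^ (q ^ (2 * N)))"
    by (rule Tr_frob_even[symmetric])
  also have "((a * x * y ^ (q ^ n)) ^ q) ^ (q ^ (2 * N))
     = a ^ (q ^ Suc (2 * N)) * x ^ (q ^ Suc (2 * N)) * y ^ (q ^ (Suc n + 2 * N))"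
    by (simp only: power_mult_distrib pqp ppq pow_pow)
  also have "Suc (2 * N) = n" using nN by simp
  also have "y ^ (q ^ (Suc n + 2 * N)) = y" using nN by (intro pexp2) simp
  finally show ?thesis using a by (simp only: mult_ac)
qed

lemma s1:
  shows "T (((b::'a) * x * y ^ (q ^ e)) ^ q) = T (b ^ q * y ^ (q ^ (e + 1)) * x ^ q)"
proof -
  have "(b * x * y ^ (q ^ e)) ^ q = b ^ q * x ^ q * y ^ (q ^ Suc e)"
    by (simp only: power_mult_distrib ppq)
  thus ?thesis by (simp only: mult_ac Suc_eq_plus1)
qed

lemma s2:
  assumes j: "2 * j \<le> n"
  shows "T (((b::'a) ^ q * x ^ (q ^ (n - 2 * j + 1)) * y ^ q) ^ q) = T (b * y * x ^ (q ^ (n - 2 * j)))"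
proof -
  have "T ((b ^ q * x ^ (q ^ (n - 2 * j + 1)) * y ^ q) ^ q)
      = T (((b ^ q * x ^ (q ^ (n - 2 * j + 1)) * y ^ q) ^ q) ^ (q ^ (2 * (n - 1))))"
    by (rule Tr_frob_even[symmetric])
  also have "((b ^ q * x ^ (q ^ (n - 2 * j + 1)) * y ^ q) ^ q) ^ (q ^ (2 * (n - 1)))
     = b ^ (q ^ (2 + 2 * (n - 1))) * x ^ (q ^ (Suc (n - 2 * j + 1) + 2 * (n - 1))) * y ^ (q ^ (2 + 2 * (n - 1)))"
    by (simp only: power_mult_distrib pqq ppq pow_pow)
  also have "b ^ (q ^ (2 + 2 * (n - 1))) = b" using npos by (intro pexp2) simp
  also have "y ^ (q ^ (2 + 2 * (n - 1))) = y" using npos by (intro pexp2) simp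
  also have "x ^ (q ^ (Suc (n - 2 * j + 1) + 2 * (n - 1))) = x ^ (q ^ (n - 2 * j))"
    using npos j by (intro pexp) simp
  finally show ?thesis by (simp only: mult_ac)
qed

lemma H_sym:
  fixes a :: "nat \<Rightarrow> 'a"
  assumes a0: "a 0 ^ (q ^ n) = a 0"
  shows "Hform q n d a y x = (Hform q n d a x y) ^ q"
proof -
  have "(Hform q n d a x y) ^ q = T ((inner a x y) ^ q)" by (simp only: H_inner Tq)
  also have "\<dots> = T ((a 0 * x * y ^ (q ^ n)) ^ q)
      + (\<Sum>j\<in>{1..J}. T ((a j * x * y ^ (q ^ (n - 2 * j))) ^ q) + T (((a j) ^ q * x ^ (q ^ (n - 2 * j + 1)) * y ^ q) ^ q))"
    unfolding inner_def by (simp only: fa1 fs1 Tr_add Tr_sum)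
  also have "\<dots> = T (a 0 * y * x ^ (q ^ n))
      + (\<Sum>j\<in>{1..J}. T (a j * y * x ^ (q ^ (n - 2 * j))) + T ((a j) ^ q * y ^ (q ^ (n - 2 * j + 1)) * x ^ q))"
  proof -
    have e0: "T ((a 0 * x * y ^ (q ^ n)) ^ q) = T (a 0 * y * x ^ (q ^ n))" by (rule s0[OF a0])
    have es: "(\<Sum>j\<in>{1..J}. T ((a j * x * y ^ (q ^ (n - 2 * j))) ^ q) + T (((a j) ^ q * x ^ (q ^ (n - 2 * j + 1)) * y ^ q) ^ q))
       = (\<Sum>j\<in>{1..J}. T (a j * y * x ^ (q ^ (n - 2 * j))) + T ((a j) ^ q * y ^ (q ^ (n - 2 * j + 1)) * x ^ q))"
    proof (rule sum.cong[OF refl])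
      fix j assume "j \<in> {1..J}"
      hence j: "2 * j \<le> n" using JN nN by auto
      show "T ((a j * x * y ^ (q ^ (n - 2 * j))) ^ q) + T (((a j) ^ q * x ^ (q ^ (n - 2 * j + 1)) * y ^ q) ^ q)
          = T (a j * y * x ^ (q ^ (n - 2 * j))) + T ((a j) ^ q * y ^ (q ^ (n - 2 * j + 1)) * x ^ q)"
        unfolding s1 s2[OF j] by (rule add.commute)
    qed
    show ?thesis by (simp only: e0 es)
  qed
  also have "\<dots> = Hform q n d a y x"
    unfolding H_inner inner_def by (simp only: Tr_add Tr_sum)
  finally show ?thesis by simp
qed

lemma H_diff_a:
  fixes a b :: "nat \<Rightarrow> 'a"
  shows "Hform q n d (\<lambda>k. a k - b k) x y = Hform q n d a x y - Hform q n d b x y"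
proof -
  have "inner (\<lambda>k. a k - b k) x y = inner a x y - inner b x y"
    unfolding inner_def by (simp only: fd1) (simp add: algebra_simps sum_subtractf)
  thus ?thesis by (simp add: H_inner Tr_diff)
qed

lemma H_add_a:
  fixes a b :: "nat \<Rightarrow> 'a"
  shows "Hform q n d (\<lambda>k. a k + b k) x y = Hform q n d a x y + Hform q n d b x y"
proof -
  have "inner (\<lambda>k. a k + b k) x y = inner a x y + inner b x y"
    unfolding inner_def by (simp only: fa1) (simp add: algebra_simps sum.distrib)
  thus ?thesis by (simp add: H_inner Tr_add)
qed

lemma H_neg_a:
  fixes a :: "nat \<Rightarrow> 'a"
  shows "Hform q n d (\<lambda>k. - a k) x y = - Hform q n d a x y"
  using H_diff_a[of "\<lambda>k. 0" a x y] H_diff_a[of "\<lambda>k. 0" "\<lambda>k. 0" x y] by simp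

lemma H_cong_a:
  fixes a b :: "nat \<Rightarrow> 'a"
  assumes "\<And>k. k \<le> J \<Longrightarrow> a k = b k"
  shows "Hform q n d a x y = Hform q n d b x y"
proof -
  have "inner a x y = inner b x y"
    unfolding inner_def using assms by (intro arg_cong2[where f = "(+)"] sum.cong) auto
  thus ?thesis by (simp add: H_inner)
qed

lemma H_zero_a: "Hform q n d (\<lambda>k. 0::'a) x y = 0"
  using H_diff_a[of "\<lambda>k. 0" "\<lambda>k. 0" x y] by simp

end


context ffd begin

definition Rad :: "(nat \<Rightarrow> 'a) \<Rightarrow> 'a set" where
  "Rad a = {y. \<forall>x. Hform q n d a x y = 0}"

lemma g_pow:
  fixes a :: "nat \<Rightarrow> 'a"
  defines "E \<equiv> n + 2 * J"
  shows "(g a y) ^ (q ^ E) = a 0 ^ (q ^ E) * y ^ (q ^ (2 * J))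
     + (\<Sum>j\<in>{1..J}. a j ^ (q ^ E) * y ^ (q ^ (2 * (J - j)))
           + (a j ^ (q ^ (n + 2 * j))) ^ (q ^ E) * y ^ (q ^ (2 * (J + j))))"
proof -
  have "(g a y) ^ (q ^ E) = a 0 ^ (q ^ E) * y ^ (q ^ (n + E))
     + (\<Sum>j\<in>{1..J}. a j ^ (q ^ E) * y ^ (q ^ (n - 2 * j + E))
           + (a j ^ (q ^ (n + 2 * j))) ^ (q ^ E) * y ^ (q ^ (n + 2 * j + E)))"
    unfolding g_def by (simp only: frob_add frob_sum power_mult_distrib pow_pow)
  also have "y ^ (q ^ (n + E)) = y ^ (q ^ (2 * J))" unfolding E_def by (intro pexp) simp
  also have "(\<Sum>j\<in>{1..J}. a j ^ (q ^ E) * y ^ (q ^ (n - 2 * j + E))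
           + (a j ^ (q ^ (n + 2 * j))) ^ (q ^ E) * y ^ (q ^ (n + 2 * j + E)))
     = (\<Sum>j\<in>{1..J}. a j ^ (q ^ E) * y ^ (q ^ (2 * (J - j)))
           + (a j ^ (q ^ (n + 2 * j))) ^ (q ^ E) * y ^ (q ^ (2 * (J + j))))"
  proof (rule sum.cong[OF refl])
    fix j assume j: "j \<in> {1..J}"
    have e1: "y ^ (q ^ (n - 2 * j + E)) = y ^ (q ^ (2 * (J - j)))"
      unfolding E_def using j JN nN by (intro pexp) auto
    have e2: "y ^ (q ^ (n + 2 * j + E)) = y ^ (q ^ (2 * (J + j)))"
      unfolding E_def using j by (intro pexp) auto
    show "a j ^ (q ^ E) * y ^ (q ^ (n - 2 * j + E)) + (a j ^ (q ^ (n + 2 * j))) ^ (q ^ E) * y ^ (q ^ (n + 2 * j + E))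
        = a j ^ (q ^ E) * y ^ (q ^ (2 * (J - j))) + (a j ^ (q ^ (n + 2 * j))) ^ (q ^ E) * y ^ (q ^ (2 * (J + j)))"
      by (simp only: e1 e2)
  qed
  finally show ?thesis .
qed

lemma reindex:
  fixes c0 :: 'a and c1 c2 :: "nat \<Rightarrow> 'a" and Y :: "nat \<Rightarrow> 'a"
  defines "b \<equiv> (\<lambda>k. if k = J then c0 else if k < J then c1 (J - k) else c2 (k - J))"
  shows "c0 * Y J + (\<Sum>j\<in>{1..J}. c1 j * Y (J - j) + c2 j * Y (J + j)) = (\<Sum>k\<in>{..2*J}. b k * Y k)"
proof -
  have s1: "(\<Sum>j\<in>{1..J}. c1 j * Y (J - j)) = (\<Sum>k\<in>{..<J}. b k * Y k)"
    by (rule sum.reindex_bij_witness[of _ "\<lambda>k. J - k" "\<lambda>j. J - j"]) (auto simp: b_def)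
  have s2: "(\<Sum>j\<in>{1..J}. c2 j * Y (J + j)) = (\<Sum>k\<in>{J<..2*J}. b k * Y k)"
    by (rule sum.reindex_bij_witness[of _ "\<lambda>k. k - J" "\<lambda>j. J + j"]) (auto simp: b_def)
  have u: "{..2*J} = {..<J} \<union> ({J} \<union> {J<..2*J})" by auto
  have "(\<Sum>k\<in>{..2*J}. b k * Y k) = (\<Sum>k\<in>{..<J}. b k * Y k) + (b J * Y J + (\<Sum>k\<in>{J<..2*J}. b k * Y k))"
    unfolding u by (subst sum.union_disjoint) (auto simp: sum.union_disjoint)
  also have "b J = c0" by (simp add: b_def)
  finally have tot: "(\<Sum>k\<in>{..2*J}. b k * Y k) = (\<Sum>k\<in>{..<J}. b k * Y k) + (c0 * Y J + (\<Sum>k\<in>{J<..2*J}. b k * Y k))" .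
  show ?thesis unfolding sum.distrib s1 s2 tot by (simp only: add_ac)
qed

lemma Rad_bound:
  fixes a :: "nat \<Rightarrow> 'a"
  assumes nz: "k0 \<le> J" "a k0 \<noteq> 0"
  shows "card (Rad a) \<le> q ^ (2 * (n - d))"
proof -
  define E where "E = n + 2 * J"
  define c0 where "c0 = a 0 ^ (q ^ E)"
  define c1 where "c1 = (\<lambda>j. a j ^ (q ^ E))"
  define c2 where "c2 = (\<lambda>j. (a j ^ (q ^ (n + 2 * j))) ^ (q ^ E))"
  define b where "b = (\<lambda>k. if k = J then c0 else if k < J then c1 (J - k) else c2 (k - J))"
  have key: "(g a y) ^ (q ^ E) = (\<Sum>k\<in>{..2*J}. b k * y ^ (q ^ (2 * k)))" for y
  proof -
    have "(g a y) ^ (q ^ E) = c0 * (\<lambda>k. y ^ (q ^ (2 * k))) J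
     + (\<Sum>j\<in>{1..J}. c1 j * (\<lambda>k. y ^ (q ^ (2 * k))) (J - j) + c2 j * (\<lambda>k. y ^ (q ^ (2 * k))) (J + j))"
      unfolding c0_def c1_def c2_def E_def by (simp only: g_pow)
    also have "\<dots> = (\<Sum>k\<in>{..2*J}. b k * (\<lambda>k. y ^ (q ^ (2 * k))) k)"
      unfolding b_def by (rule reindex)
    finally show ?thesis by simp
  qed
  have sub: "Rad a \<subseteq> {y. (\<Sum>k\<in>{..2*J}. b k * y ^ (q ^ (2 * k))) = 0}"
  proof
    fix y assume "y \<in> Rad a"
    hence "\<And>x. T (x * g a y) = 0" unfolding Rad_def by (simp add: H_g)
    hence "g a y = 0" by (rule Tr_nondeg)
    hence "(g a y) ^ (q ^ E) = 0" using q_ge2 by simp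
    thus "y \<in> {y. (\<Sum>k\<in>{..2*J}. b k * y ^ (q ^ (2 * k))) = 0}" using key by simp
  qed
  obtain kz where kz: "kz \<le> 2 * J" "b kz \<noteq> 0"
  proof (cases "k0 = 0")
    case True
    show ?thesis using that[of J] nz True by (auto simp: b_def c0_def)
  next
    case False
    show ?thesis using that[of "J - k0"] nz False by (auto simp: b_def c1_def)
  qed
  have "card {y. (\<Sum>k\<in>{..2*J}. b k * y ^ (q ^ (2 * k))) = 0} \<le> q ^ (2 * (2 * J))"
  proof (rule roots_bound)
    show "inj_on (\<lambda>k. 2 * k) {..2*J}" by (simp add: inj_on_def)
    show "finite {..2*J}" by simp
    show "kz \<in> {..2*J}" using kz(1) by simp
    show "b kz \<noteq> 0" by (rule kz(2))
    show "\<And>k. k \<in> {..2*J} \<Longrightarrow> 2 * k \<le> 2 * (2 * J)" by simp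
  qed
  moreover have "card (Rad a) \<le> card {y. (\<Sum>k\<in>{..2*J}. b k * y ^ (q ^ (2 * k))) = 0}"
    by (rule card_mono[OF _ sub]) simp
  ultimately have "card (Rad a) \<le> q ^ (2 * (2 * J))" by linarith
  thus ?thesis using dJ by simp
qed

end


context ffq begin

abbreviation Ks :: "'a set" where "Ks \<equiv> {c. c ^ (q^2) = c}"

lemma K_add: "a \<in> Ks \<Longrightarrow> b \<in> Ks \<Longrightarrow> a + b \<in> Ks" by (simp add: frob_add)
lemma K_diff: "a \<in> Ks \<Longrightarrow> b \<in> Ks \<Longrightarrow> a - b \<in> Ks" by (simp add: frob_diff)
lemma K_neg: "a \<in> Ks \<Longrightarrow> - a \<in> Ks" by (simp add: frob_neg)
lemma K_mult: "a \<in> Ks \<Longrightarrow> b \<in> Ks \<Longrightarrow> a * b \<in> Ks" by (simp add: power_mult_distrib)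
lemma K_zero: "(0::'a) \<in> Ks" using q_ge2 by simp
lemma K_one: "(1::'a) \<in> Ks" by simp
lemma K_div: "a \<in> Ks \<Longrightarrow> b \<in> Ks \<Longrightarrow> a / b \<in> Ks" by (simp add: power_divide)
lemma K_sum: "(\<And>i. i \<in> A \<Longrightarrow> f i \<in> Ks) \<Longrightarrow> sum f A \<in> Ks"
  by (simp add: frob_sum)

lemma card_Ks: "card Ks = q^2"
  using card_subfield[of 2 n] npos by simp

definition KV :: "'a vec set" where "KV = {v \<in> carrier_vec n. \<forall>i<n. v $ i \<in> Ks}"

lemma KV_bij: "bij_betw (\<lambda>f. vec n f) (PiE {..<n} (\<lambda>_. Ks)) KV"
proof -
  have "inj_on (\<lambda>f. vec n f) (PiE {..<n} (\<lambda>_. Ks))"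
  proof (rule inj_onI)
    fix f g assume f: "f \<in> PiE {..<n} (\<lambda>_. Ks)" and g: "g \<in> PiE {..<n} (\<lambda>_. Ks)" and e: "vec n f = vec n g"
    show "f = g"
    proof (rule PiE_ext[OF f g])
      fix i assume "i \<in> {..<n}"
      hence "vec n f $ i = f i" "vec n g $ i = g i" by auto
      thus "f i = g i" using e by simp
    qed
  qed
  moreover have "(\<lambda>f. vec n f) ` (PiE {..<n} (\<lambda>_. Ks)) = KV"
  proof
    show "(\<lambda>f. vec n f) ` (PiE {..<n} (\<lambda>_. Ks)) \<subseteq> KV"
    proof
      fix u assume "u \<in> (\<lambda>f. vec n f) ` (PiE {..<n} (\<lambda>_. Ks))"
      then obtain f where f: "f \<in> PiE {..<n} (\<lambda>_. Ks)" and u: "u = vec n f" by blast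
      have "\<forall>i<n. u $ i \<in> Ks"
      proof (intro allI impI)
        fix i assume i: "i < n"
        have "f i \<in> Ks" using PiE_mem[OF f] i by blast
        thus "u $ i \<in> Ks" using u i by simp
      qed
      moreover have "u \<in> carrier_vec n" using u by simp
      ultimately show "u \<in> KV" unfolding KV_def by blast
    qed
    show "KV \<subseteq> (\<lambda>f. vec n f) ` (PiE {..<n} (\<lambda>_. Ks))"
    proof
      fix v assume v: "v \<in> KV"
      have "v = vec n (restrict (($) v) {..<n})"
        using v unfolding KV_def by (intro eq_vecI) auto
      moreover have "restrict (($) v) {..<n} \<in> PiE {..<n} (\<lambda>_. Ks)"
        using v unfolding KV_def by auto
      ultimately show "v \<in> (\<lambda>f. vec n f) ` (PiE {..<n} (\<lambda>_. Ks))" by blast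
    qed
  qed
  ultimately show ?thesis unfolding bij_betw_def by blast
qed

lemma card_KV: "card KV = (q^2)^n"
  using bij_betw_same_card[OF KV_bij] card_PiE[of "{..<n}" "\<lambda>_. Ks"] card_Ks by simp

lemma finite_KV: "finite KV"
  using bij_betw_finite[OF KV_bij] by (simp add: finite_PiE)

definition Kind :: "'a vec set \<Rightarrow> bool" where
  "Kind S \<longleftrightarrow> (\<forall>c. (\<forall>s\<in>S. c s \<in> Ks) \<longrightarrow> (\<forall>i<n. (\<Sum>s\<in>S. c s * s $ i) = 0) \<longrightarrow> (\<forall>s\<in>S. c s = 0))"

lemma rank_core:
  fixes M :: "'a mat" and dd :: nat
  assumes M: "M \<in> carrier_mat n n" and MK: "\<And>i j. i < n \<Longrightarrow> j < n \<Longrightarrow> M $$ (i,j) \<in> Ks"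
    and ker: "card {v \<in> KV. M *\<^sub>v v = 0\<^sub>v n} \<le> q ^ (2 * (n - dd))"
    and dd: "dd \<le> n"
  shows "\<exists>S. S \<subseteq> set (cols M) \<and> Kind S \<and> dd \<le> card S"
proof -
  define C where "C = set (cols M)"
  have Ccar: "C \<subseteq> carrier_vec n" unfolding C_def using cols_dim[of M] M by simp
  have CK: "\<And>w i. w \<in> C \<Longrightarrow> i < n \<Longrightarrow> w $ i \<in> Ks"
  proof -
    fix w i assume w: "w \<in> C" and i: "i < n"
    from w obtain j where j: "j < n" "w = col M j" unfolding C_def cols_def using M by auto
    show "w $ i \<in> Ks" using j i M MK by simp
  qed
  have colC: "\<And>j. j < n \<Longrightarrow> col M j \<in> C"
    unfolding C_def cols_def using M by auto
  have finC: "finite C" unfolding C_def by simp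
  define F where "F = {S. S \<subseteq> C \<and> Kind S}"
  have finF: "finite F" unfolding F_def using finC by simp
  have "{} \<in> F" unfolding F_def Kind_def by simp
  hence Fne: "F \<noteq> {}" by blast
  obtain S where SF: "S \<in> F" and Smax: "\<And>S'. S' \<in> F \<Longrightarrow> card S' \<le> card S"
  proof -
    have "Max (card ` F) \<in> card ` F" using finF Fne by simp
    then obtain S where "S \<in> F" "card S = Max (card ` F)" by auto
    moreover have "\<And>S'. S' \<in> F \<Longrightarrow> card S' \<le> Max (card ` F)" using finF by simp
    ultimately show ?thesis using that by metis
  qed
  have SC: "S \<subseteq> C" and KS: "Kind S" using SF unfolding F_def by auto
  have finS: "finite S" using SC finC finite_subset by blast
  have span: "\<exists>c. (\<forall>s\<in>S. c s \<in> Ks) \<and> (\<forall>i<n. w $ i = (\<Sum>s\<in>S. c s * s $ i))" if w: "w \<in> C" for w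
  proof (cases "w \<in> S")
    case True
    show ?thesis
    proof (intro exI[of _ "\<lambda>s. if s = w then 1 else 0"] conjI allI impI ballI)
      fix s assume "s \<in> S" show "(if s = w then 1 else 0) \<in> Ks" using K_zero K_one by simp
    next
      fix i assume "i < n"
      have "(\<Sum>s\<in>S. (if s = w then 1 else 0) * s $ i) = (\<Sum>s\<in>S. if s = w then s $ i else 0)"
        by (intro sum.cong) auto
      also have "\<dots> = w $ i" using True finS by (simp add: sum.delta)
      finally show "w $ i = (\<Sum>s\<in>S. (if s = w then 1 else 0) * s $ i)" by simp
    qed
  next
    case False
    have "\<not> Kind (insert w S)"
    proof
      assume "Kind (insert w S)"
      hence "insert w S \<in> F" using SC w unfolding F_def by auto
      hence "card (insert w S) \<le> card S" by (rule Smax)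
      thus False using False finS by simp
    qed
    then obtain c where cK: "\<forall>s\<in>insert w S. c s \<in> Ks"
      and c0: "\<forall>i<n. (\<Sum>s\<in>insert w S. c s * s $ i) = 0"
      and nz: "\<exists>s\<in>insert w S. c s \<noteq> 0"
      unfolding Kind_def by blast
    have c0': "\<And>i. i < n \<Longrightarrow> c w * w $ i + (\<Sum>s\<in>S. c s * s $ i) = 0"
      using c0 False finS by simp
    have cw: "c w \<noteq> 0"
    proof
      assume cw0: "c w = 0"
      hence "\<forall>i<n. (\<Sum>s\<in>S. c s * s $ i) = 0" using c0' by simp
      hence "\<forall>s\<in>S. c s = 0" using KS cK unfolding Kind_def by simp
      thus False using nz cw0 by auto
    qed
    show ?thesis
    proof (intro exI[of _ "\<lambda>s. - c s / c w"] conjI allI impI ballI)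
      fix s assume "s \<in> S" thus "- c s / c w \<in> Ks" using cK K_neg K_div by simp
    next
      fix i assume i: "i < n"
      have "w $ i = - (\<Sum>s\<in>S. c s * s $ i) / c w"
        using c0'[OF i] cw by (simp add: field_simps add_eq_0_iff)
      also have "\<dots> = (\<Sum>s\<in>S. - c s / c w * s $ i)"
        by (simp add: sum_divide_distrib sum_negf[symmetric])
      finally show "w $ i = (\<Sum>s\<in>S. - c s / c w * s $ i)" .
    qed
  qed
  obtain cf where cf: "\<And>w. w \<in> C \<Longrightarrow> (\<forall>s\<in>S. cf w s \<in> Ks) \<and> (\<forall>i<n. w $ i = (\<Sum>s\<in>S. cf w s * s $ i))"
    using bchoice[of C "\<lambda>w c. (\<forall>s\<in>S. c s \<in> Ks) \<and> (\<forall>i<n. w $ i = (\<Sum>s\<in>S. c s * s $ i))"] span by blast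
  define lcS where "lcS = (\<lambda>c. vec n (\<lambda>i. \<Sum>s\<in>S. c s * s $ i))"
  have img: "(\<lambda>v. M *\<^sub>v v) ` KV \<subseteq> lcS ` (PiE S (\<lambda>_. Ks))"
  proof
    fix u assume "u \<in> (\<lambda>v. M *\<^sub>v v) ` KV"
    then obtain v where v: "v \<in> KV" and u: "u = M *\<^sub>v v" by auto
    define e where "e = (\<lambda>s. \<Sum>j<n. v $ j * cf (col M j) s)"
    have eK: "\<And>s. s \<in> S \<Longrightarrow> e s \<in> Ks"
      unfolding e_def using v cf colC unfolding KV_def by (intro K_sum K_mult) auto
    have "M *\<^sub>v v = lcS e"
    proof (rule eq_vecI)
      show "dim_vec (M *\<^sub>v v) = dim_vec (lcS e)" using M by (simp add: lcS_def)
      fix i assume "i < dim_vec (lcS e)"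
      hence i: "i < n" by (simp add: lcS_def)
      have dv: "dim_vec v = n" using v unfolding KV_def by simp
      have "(M *\<^sub>v v) $ i = (\<Sum>j\<in>{0..<n}. M $$ (i, j) * v $ j)"
        using M i dv by (simp add: scalar_prod_def)
      also have "\<dots> = (\<Sum>j<n. (\<Sum>s\<in>S. cf (col M j) s * s $ i) * v $ j)"
      proof (rule sum.cong)
        show "{0..<n} = {..<n}" by auto
        fix j assume "j \<in> {..<n}"
        hence j: "j < n" by simp
        have "M $$ (i, j) = col M j $ i" using M i j by simp
        also have "\<dots> = (\<Sum>s\<in>S. cf (col M j) s * s $ i)" using cf[OF colC[OF j]] i by blast
        finally show "M $$ (i, j) * v $ j = (\<Sum>s\<in>S. cf (col M j) s * s $ i) * v $ j" by simp
      qed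
      also have "\<dots> = (\<Sum>j<n. \<Sum>s\<in>S. v $ j * cf (col M j) s * s $ i)"
        by (simp add: sum_distrib_right sum_distrib_left mult_ac)
      also have "\<dots> = (\<Sum>s\<in>S. \<Sum>j<n. v $ j * cf (col M j) s * s $ i)"
        by (rule sum.swap)
      also have "\<dots> = (\<Sum>s\<in>S. e s * s $ i)"
        unfolding e_def by (simp add: sum_distrib_right)
      also have "\<dots> = lcS e $ i" using i by (simp add: lcS_def)
      finally show "(M *\<^sub>v v) $ i = lcS e $ i" .
    qed
    also have "lcS e = lcS (restrict e S)" unfolding lcS_def by (intro arg_cong[where f = "vec n"] ext sum.cong) auto
    finally have "u = lcS (restrict e S)" using u by simp
    moreover have "restrict e S \<in> PiE S (\<lambda>_. Ks)" using eK by auto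
    ultimately show "u \<in> lcS ` (PiE S (\<lambda>_. Ks))" by blast
  qed
  have cimg: "card ((\<lambda>v. M *\<^sub>v v) ` KV) \<le> (q^2) ^ card S"
  proof -
    have "card ((\<lambda>v. M *\<^sub>v v) ` KV) \<le> card (lcS ` (PiE S (\<lambda>_. Ks)))"
      by (rule card_mono[OF _ img]) (simp add: finS finite_PiE)
    also have "\<dots> \<le> card (PiE S (\<lambda>_. Ks))" by (rule card_image_le) (simp add: finS finite_PiE)
    also have "\<dots> = (q^2) ^ card S" using card_PiE[OF finS, of "\<lambda>_. Ks"] card_Ks by simp
    finally show ?thesis .
  qed
  have fc: "card KV \<le> card ((\<lambda>v. M *\<^sub>v v) ` KV) * card {v \<in> KV. M *\<^sub>v v = 0\<^sub>v n}"
  proof (rule fiber_count[where sub = "\<lambda>u v. u - v"])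
    show "finite KV" by (rule finite_KV)
  next
    fix u v assume u: "u \<in> KV" and v: "v \<in> KV"
    thus "u - v \<in> KV" unfolding KV_def by (auto simp: frob_diff)
  next
    fix u v assume u: "u \<in> KV" and v: "v \<in> KV" and e: "M *\<^sub>v u = M *\<^sub>v v"
    have uc: "u \<in> carrier_vec n" and vc: "v \<in> carrier_vec n" using u v unfolding KV_def by auto
    have "M *\<^sub>v (u - v) = M *\<^sub>v u - M *\<^sub>v v" using M uc vc by (rule mult_minus_distrib_mat_vec)
    also have "\<dots> = 0\<^sub>v n" using e M by (auto intro!: eq_vecI)
    finally show "M *\<^sub>v (u - v) = 0\<^sub>v n" .
  next
    fix u u' v assume u: "u \<in> KV" and u': "u' \<in> KV" and v: "v \<in> KV" and e: "u - v = u' - v"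
    have uc: "u \<in> carrier_vec n" and vc: "v \<in> carrier_vec n" and uc': "u' \<in> carrier_vec n"
      using u u' v unfolding KV_def by auto
    show "u = u'"
    proof (rule eq_vecI)
      fix i assume "i < dim_vec u'"
      hence i: "i < n" using uc' by simp
      have "(u - v) $ i = (u' - v) $ i" using e by simp
      thus "u $ i = u' $ i" using i uc vc uc' by simp
    qed (use uc uc' in simp)
  qed
  have "(q^2) ^ n \<le> (q^2) ^ card S * (q^2) ^ (n - dd)"
  proof -
    have "(q^2) ^ n = card KV" by (simp add: card_KV)
    also have "\<dots> \<le> card ((\<lambda>v. M *\<^sub>v v) ` KV) * card {v \<in> KV. M *\<^sub>v v = 0\<^sub>v n}" by (rule fc)
    also have "\<dots> \<le> (q^2) ^ card S * q ^ (2 * (n - dd))" by (rule mult_le_mono[OF cimg ker])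
    also have "q ^ (2 * (n - dd)) = (q^2) ^ (n - dd)" by (simp add: power_mult)
    finally show ?thesis .
  qed
  hence "(q^2) ^ n \<le> (q^2) ^ (card S + (n - dd))" by (simp add: power_add)
  moreover have q2: "1 < q^2" using q_ge2 one_less_power[of q 2] by simp
  ultimately have "n \<le> card S + (n - dd)" using power_le_imp_le_exp by blast
  hence dS: "dd \<le> card S" using dd by simp
  have SC': "S \<subseteq> set (cols M)" using SC unfolding C_def .
  show ?thesis by (rule exI[where x = S]) (intro conjI SC' KS dS)
qed

lemma Kind_indep:
  fixes M :: "'a mat" and \<xi> :: "nat \<Rightarrow> 'a"
  assumes M: "M \<in> carrier_mat n n" and MK: "\<And>i j. i < n \<Longrightarrow> j < n \<Longrightarrow> M $$ (i,j) \<in> Ks"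
    and bas: "is_basis q n \<xi>" and SC0: "S \<subseteq> set (cols M)" and KS: "Kind S"
  shows "\<not> module.lin_dep class_ring (module_vec TYPE('a) n) S"
proof -
  interpret vs: vec_space "TYPE('a)" n .
  define C where "C = set (cols M)"
  have SC: "S \<subseteq> C" using SC0 C_def by simp
  have Ccar: "C \<subseteq> carrier_vec n" unfolding C_def using cols_dim[of M] M by simp
  have CK: "\<And>w i. w \<in> C \<Longrightarrow> i < n \<Longrightarrow> w $ i \<in> Ks"
  proof -
    fix w i assume w: "w \<in> C" and i: "i < n"
    from w obtain j where j: "j < n" "w = col M j" unfolding C_def cols_def using M by auto
    show "w $ i \<in> Ks" using j i M MK by simp
  qed
  have finC: "finite C" unfolding C_def by simp
  have finS: "finite S" using SC finC finite_subset by blast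
  have indep: "vs.lin_indpt S"
  proof
    assume "vs.lin_dep S"
    then obtain A a v where A: "finite A" "A \<subseteq> S" and lc: "vs.lincomb a A = 0\<^sub>v n"
      and v: "v \<in> A" "a v \<noteq> 0"
      unfolding vs.lin_dep_def by auto
    have Acar: "A \<subseteq> carrier_vec n" using A SC Ccar by auto
    have comp: "(\<Sum>s\<in>A. a s * s $ i) = 0" if i: "i < n" for i
    proof -
      have "vs.lincomb a A $ i = (\<Sum>s\<in>A. a s * s $ i)" by (rule vs.lincomb_index[OF i Acar])
      thus ?thesis using lc i by simp
    qed
    have "\<forall>x. \<exists>c. (\<forall>l<n. c l \<in> Ks) \<and> (\<forall>l\<ge>n. c l = 0) \<and> x = (\<Sum>l<n. c l * \<xi> l)"
      using bas unfolding is_basis_def subfield_of_order_def by blast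
    then obtain co where co: "\<And>x. (\<forall>l<n. co x l \<in> Ks) \<and> (\<forall>l\<ge>n. co x l = 0) \<and> x = (\<Sum>l<n. co x l * \<xi> l)"
      by metis
    have uniq0: "\<And>e. (\<forall>l<n. e l \<in> Ks) \<Longrightarrow> (\<forall>l\<ge>n. e l = 0) \<Longrightarrow> 0 = (\<Sum>l<n. e l * \<xi> l) \<Longrightarrow> e = (\<lambda>_. 0)"
    proof -
      fix e :: "nat \<Rightarrow> 'a"
      assume h: "\<forall>l<n. e l \<in> Ks" "\<forall>l\<ge>n. e l = 0" "0 = (\<Sum>l<n. e l * \<xi> l)"
      have ex1: "\<exists>!c. (\<forall>l<n. c l \<in> Ks) \<and> (\<forall>l\<ge>n. c l = 0) \<and> (0::'a) = (\<Sum>l<n. c l * \<xi> l)"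
        using bas unfolding is_basis_def subfield_of_order_def by blast
      have z: "(\<forall>l<n. (\<lambda>_. 0::'a) l \<in> Ks) \<and> (\<forall>l\<ge>n. (\<lambda>_. 0::'a) l = 0) \<and> (0::'a) = (\<Sum>l<n. (\<lambda>_. 0) l * \<xi> l)"
        using K_zero by simp
      from ex1 obtain c where uq: "\<forall>y. ((\<forall>l<n. y l \<in> Ks) \<and> (\<forall>l\<ge>n. y l = 0) \<and> (0::'a) = (\<Sum>l<n. y l * \<xi> l)) \<longrightarrow> y = c"
        by (elim ex1E) blast
      have "e = c" using uq h by simp
      moreover have "(\<lambda>_. 0) = c" using uq z by simp
      ultimately show "e = (\<lambda>_. 0)" by simp
    qed
    have zc: "(\<Sum>s\<in>A. co (a s) l * s $ i) = 0" if i: "i < n" and l: "l < n" for i l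
    proof -
      define e where "e = (\<lambda>l. if l < n then (\<Sum>s\<in>A. co (a s) l * s $ i) else 0)"
      have eK: "\<forall>l<n. e l \<in> Ks"
      proof (intro allI impI)
        fix l assume l: "l < n"
        have "(\<Sum>s\<in>A. co (a s) l * s $ i) \<in> Ks"
        proof (rule K_sum)
          fix s assume "s \<in> A"
          hence sC: "s \<in> C" using A SC by auto
          have c1: "co (a s) l \<in> Ks" using co[of "a s"] l by blast
          show "co (a s) l * s $ i \<in> Ks" by (rule K_mult[OF c1 CK[OF sC i]])
        qed
        thus "e l \<in> Ks" unfolding e_def using l by simp
      qed
      have e0: "\<forall>l\<ge>n. e l = 0" unfolding e_def by simp
      have "(\<Sum>l<n. e l * \<xi> l) = (\<Sum>l<n. \<Sum>s\<in>A. co (a s) l * s $ i * \<xi> l)"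
        unfolding e_def by (simp add: sum_distrib_right)
      also have "\<dots> = (\<Sum>s\<in>A. s $ i * (\<Sum>l<n. co (a s) l * \<xi> l))"
        by (subst sum.swap) (simp add: sum_distrib_left mult_ac)
      also have "\<dots> = (\<Sum>s\<in>A. s $ i * a s)"
        using co by (intro sum.cong refl) metis
      also have "\<dots> = 0" using comp[OF i] by (simp add: mult_ac)
      finally have "e = (\<lambda>_. 0)" using uniq0 eK e0 by simp
      hence "e l = 0" by simp
      thus ?thesis using l unfolding e_def by simp
    qed
    have "\<forall>l<n. co (a v) l = 0"
    proof (intro allI impI)
      fix l assume l: "l < n"
      define c where "c = (\<lambda>s. if s \<in> A then co (a s) l else 0)"
      have "\<forall>s\<in>S. c s \<in> Ks" unfolding c_def using co l K_zero by auto
      moreover have "\<forall>i<n. (\<Sum>s\<in>S. c s * s $ i) = 0"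
      proof (intro allI impI)
        fix i assume i: "i < n"
        have "(\<Sum>s\<in>S. c s * s $ i) = (\<Sum>s\<in>S. if s \<in> A then co (a s) l * s $ i else 0)"
          unfolding c_def by (intro sum.cong) auto
        also have "\<dots> = (\<Sum>s\<in>S \<inter> A. co (a s) l * s $ i)" by (rule sum.inter_restrict[OF finS, symmetric])
        also have "S \<inter> A = A" using A by auto
        finally show "(\<Sum>s\<in>S. c s * s $ i) = 0" using zc[OF i l] by simp
      qed
      ultimately have "\<forall>s\<in>S. c s = 0" using KS unfolding Kind_def by blast
      moreover have vS: "v \<in> S" using v A by auto
      ultimately have "c v = 0" by blast
      thus "co (a v) l = 0" using v by (simp add: c_def)
    qed
    hence "a v = 0" using co[of "a v"] by simp
    thus False using v by simp
  qed
  thus ?thesis .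
qed

lemma rank_bound:
  fixes M :: "'a mat" and \<xi> :: "nat \<Rightarrow> 'a" and dd :: nat
  assumes M: "M \<in> carrier_mat n n" and MK: "\<And>i j. i < n \<Longrightarrow> j < n \<Longrightarrow> M $$ (i,j) \<in> Ks"
    and bas: "is_basis q n \<xi>" and ker: "card {v \<in> KV. M *\<^sub>v v = 0\<^sub>v n} \<le> q ^ (2 * (n - dd))"
    and dd: "dd \<le> n"
  shows "dd \<le> vec_space.rank n M"
proof -
  interpret vs: vec_space "TYPE('a)" n .
  from rank_core[OF M MK ker dd] obtain S where H: "S \<subseteq> set (cols M) \<and> Kind S \<and> dd \<le> card S"
    by (rule exE)
  have SC0: "S \<subseteq> set (cols M)" by (rule conjunct1[OF H])
  have KS: "Kind S" by (rule conjunct1[OF conjunct2[OF H]])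
  have dS: "dd \<le> card S" by (rule conjunct2[OF conjunct2[OF H]])
  have indep: "vs.lin_indpt S" by (rule Kind_indep[OF M MK bas SC0 KS])
  have "card S \<le> vs.rank M" by (rule vs.rank_ge_card_indpt[OF M SC0 indep])
  from le_trans[OF dS this] show ?thesis .
qed

end


context ffd begin

lemma H0_left: fixes a :: "nat \<Rightarrow> 'a" shows "Hform q n d a 0 y = 0"
  using H_smult_left[where c = 0 and a = a and x = 0 and y = y] q_ge2 by simp

lemma H_sum_left: fixes a :: "nat \<Rightarrow> 'a"
  shows "Hform q n d a (sum f A) y = (\<Sum>i\<in>A. Hform q n d a (f i) y)"
proof (induction A rule: infinite_finite_induct)
  case (infinite A) thus ?case using H0_left by simp
next
  case empty thus ?case using H0_left by simp
next
  case (insert x F) thus ?case by (simp add: H_add_left)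
qed

lemma H_add_right:
  fixes a :: "nat \<Rightarrow> 'a"
  assumes a0: "a 0 ^ (q ^ n) = a 0"
  shows "Hform q n d a x (y + y') = Hform q n d a x y + Hform q n d a x y'"
proof -
  have "Hform q n d a x (y + y') = (Hform q n d a (y + y') x) ^ q" using H_sym[where a = a, OF a0, of x "y + y'"] by simp
  also have "\<dots> = (Hform q n d a y x) ^ q + (Hform q n d a y' x) ^ q" by (simp add: H_add_left fa1)
  also have "(Hform q n d a y x) ^ q = Hform q n d a x y"
    using H_sym[where a = a, OF a0, of x y] H_sym[where a = a, OF a0, of y x] H_in_K[of a x y] by (simp add: pqq)
  also have "(Hform q n d a y' x) ^ q = Hform q n d a x y'"
    using H_sym[where a = a, OF a0, of x y'] H_sym[where a = a, OF a0, of y' x] H_in_K[of a x y'] by (simp add: pqq)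
  finally show ?thesis .
qed

lemma H_smult_right:
  fixes a :: "nat \<Rightarrow> 'a"
  assumes a0: "a 0 ^ (q ^ n) = a 0" and c: "c ^ (q^2) = c"
  shows "Hform q n d a x (c * y) = c ^ q * Hform q n d a x y"
proof -
  have "Hform q n d a x (c * y) = (Hform q n d a (c * y) x) ^ q" using H_sym[where a = a, OF a0, of x "c * y"] by simp
  also have "\<dots> = c ^ q * (Hform q n d a y x) ^ q" by (simp add: H_smult_left[OF c] power_mult_distrib)
  also have "(Hform q n d a y x) ^ q = Hform q n d a x y"
    using H_sym[where a = a, OF a0, of x y] H_sym[where a = a, OF a0, of y x] H_in_K[of a x y] by (simp add: pqq)
  finally show ?thesis .
qed

lemma H0_right: fixes a :: "nat \<Rightarrow> 'a" assumes a0: "a 0 ^ (q ^ n) = a 0"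
  shows "Hform q n d a x 0 = 0"
  using H_sym[where a = a, OF a0, of x 0] H0_left[of a x] q_ge2 by simp

lemma H_sum_right: fixes a :: "nat \<Rightarrow> 'a" assumes a0: "a 0 ^ (q ^ n) = a 0"
  shows "Hform q n d a x (sum f A) = (\<Sum>i\<in>A. Hform q n d a x (f i))"
proof (induction A rule: infinite_finite_induct)
  case (infinite A) thus ?case using H0_right[where a = a, OF a0] by simp
next
  case empty thus ?case using H0_right[where a = a, OF a0] by simp
next
  case (insert x F) thus ?case by (simp add: H_add_right[where a = a, OF a0])
qed

definition FM :: "(nat \<Rightarrow> 'a) \<Rightarrow> (nat \<Rightarrow> 'a) \<Rightarrow> 'a mat" where
  "FM \<xi> a = form_matrix n \<xi> (Hform q n d a)"

lemma FM_carrier: "FM \<xi> a \<in> carrier_mat n n"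
  unfolding FM_def form_matrix_def by simp

lemma FM_index: "i < n \<Longrightarrow> j < n \<Longrightarrow> FM \<xi> a $$ (i, j) = Hform q n d a (\<xi> i) (\<xi> j)"
  unfolding FM_def form_matrix_def by simp

lemma FM_dims: "dim_row (FM \<xi> a) = n" "dim_col (FM \<xi> a) = n"
  using FM_carrier[of \<xi> a] by auto

lemma FM_diff: "FM \<xi> (\<lambda>k. a k - b k) = FM \<xi> a - FM \<xi> b"
  by (rule eq_matI) (simp_all add: FM_dims FM_index H_diff_a)

lemma FM_add: "FM \<xi> (\<lambda>k. a k + b k) = FM \<xi> a + FM \<xi> b"
  by (rule eq_matI) (simp_all add: FM_dims FM_index H_add_a)

lemma FM_neg: "FM \<xi> (\<lambda>k. - a k) = - FM \<xi> a"
  by (rule eq_matI) (simp_all add: FM_dims FM_index H_neg_a)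

lemma FM_zero: "FM \<xi> (\<lambda>k. 0) = 0\<^sub>m n n"
  by (rule eq_matI) (simp_all add: FM_dims FM_index H_zero_a)

lemma FM_cong:
  assumes h: "\<And>k. k \<le> J \<Longrightarrow> a k = b k"
  shows "FM \<xi> a = FM \<xi> b"
proof -
  have "\<And>x y. Hform q n d a x y = Hform q n d b x y" by (rule H_cong_a[OF h])
  hence "Hform q n d a = Hform q n d b" by (intro ext)
  thus ?thesis unfolding FM_def by simp
qed

lemma FM_herm:
  assumes a0: "a 0 ^ (q ^ n) = a 0"
  shows "FM \<xi> a \<in> hermitian_mats n q"
proof -
  have c: "FM \<xi> a \<in> carrier_mat n n" by (rule FM_carrier)
  have e: "\<forall>i<n. \<forall>j<n. FM \<xi> a $$ (i, j) \<in> {x. x ^ (q^2) = x} \<and> FM \<xi> a $$ (j, i) = FM \<xi> a $$ (i, j) ^ q"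
  proof (intro allI impI conjI)
    fix i j assume i: "i < n" and j: "j < n"
    show "FM \<xi> a $$ (i, j) \<in> {x. x ^ (q^2) = x}" using i j H_in_K by (simp add: FM_index)
    have "Hform q n d a (\<xi> j) (\<xi> i) = (Hform q n d a (\<xi> i) (\<xi> j)) ^ q"
      by (rule H_sym[where a = a, OF a0])
    thus "FM \<xi> a $$ (j, i) = FM \<xi> a $$ (i, j) ^ q" using i j by (simp only: FM_index)
  qed
  show ?thesis unfolding hermitian_mats_def subfield_of_order_def using c e by blast
qed

lemma herm_form:
  fixes a :: "nat \<Rightarrow> 'a"
  assumes a0: "a 0 ^ (q ^ n) = a 0"
  shows "hermitian_form q (Hform q n d a)"
  unfolding hermitian_form_def subfield_of_order_def
proof (intro conjI allI ballI)
  fix x y show "Hform q n d a x y \<in> {x. x ^ q\<^sup>2 = x}" using H_in_K by simp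
next
  fix x x' y show "Hform q n d a (x + x') y = Hform q n d a x y + Hform q n d a x' y" by (rule H_add_left)
next
  fix c x y assume "c \<in> {x::'a. x ^ q\<^sup>2 = x}"
  thus "Hform q n d a (c * x) y = c * Hform q n d a x y" using H_smult_left by simp
next
  fix x y show "Hform q n d a y x = Hform q n d a x y ^ q" by (rule H_sym[where a = a, OF a0])
qed

lemma rank_FM:
  fixes a :: "nat \<Rightarrow> 'a"
  assumes a0: "a 0 ^ (q ^ n) = a 0" and nz: "k0 \<le> J" "a k0 \<noteq> 0" and bas: "is_basis q n \<xi>"
  shows "d \<le> mrank n (FM \<xi> a)"
proof -
  define M where "M = FM \<xi> a"
  define \<phi> where "\<phi> = (\<lambda>v. \<Sum>j<n. (v $ j) ^ q * \<xi> j)"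
  have ex1: "\<And>x. \<exists>!c. (\<forall>i<n. c i \<in> Ks) \<and> (\<forall>i\<ge>n. c i = 0) \<and> x = (\<Sum>i<n. c i * \<xi> i)"
    using bas unfolding is_basis_def subfield_of_order_def by blast
  have rad: "\<phi> v \<in> Rad a" if v: "v \<in> KV" "M *\<^sub>v v = 0\<^sub>v n" for v
  proof -
    have vc: "v \<in> carrier_vec n" and vK: "\<And>j. j < n \<Longrightarrow> (v $ j) ^ (q^2) = v $ j"
      using v unfolding KV_def by auto
    have vqK: "((v $ j) ^ q) ^ (q^2) = (v $ j) ^ q" if "j < n" for j
      using vK[OF that] by (metis pow_pow ppq pqp add.commute power_one_right)
    have base: "Hform q n d a (\<xi> i) (\<phi> v) = 0" if i: "i < n" for i
    proof -
      have "Hform q n d a (\<xi> i) (\<phi> v) = (\<Sum>j<n. Hform q n d a (\<xi> i) ((v $ j) ^ q * \<xi> j))"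
        unfolding \<phi>_def by (rule H_sum_right[where a = a, OF a0])
      also have "\<dots> = (\<Sum>j<n. M $$ (i, j) * v $ j)"
      proof (rule sum.cong[OF refl])
        fix j assume "j \<in> {..<n}"
        hence j: "j < n" by simp
        have "Hform q n d a (\<xi> i) ((v $ j) ^ q * \<xi> j) = ((v $ j) ^ q) ^ q * Hform q n d a (\<xi> i) (\<xi> j)"
          by (rule H_smult_right[where a = a, OF a0 vqK[OF j]])
        also have "((v $ j) ^ q) ^ q = v $ j" using vK[OF j] by (simp add: pqq)
        finally show "Hform q n d a (\<xi> i) ((v $ j) ^ q * \<xi> j) = M $$ (i, j) * v $ j"
          using i j by (simp add: M_def FM_index mult.commute)
      qed
      also have "\<dots> = (M *\<^sub>v v) $ i"
        using i vc by (simp add: M_def FM_dims scalar_prod_def atLeast0LessThan)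
      also have "\<dots> = 0" using v(2) i by simp
      finally show ?thesis .
    qed
    show ?thesis unfolding Rad_def
    proof (intro CollectI allI)
      fix x :: 'a
      obtain c where c: "\<forall>i<n. c i \<in> Ks" "\<forall>i\<ge>n. c i = 0" "x = (\<Sum>i<n. c i * \<xi> i)"
        using ex1[of x] by blast
      have "Hform q n d a x (\<phi> v) = (\<Sum>i<n. Hform q n d a (c i * \<xi> i) (\<phi> v))"
        using c(3) H_sum_left by simp
      also have "\<dots> = (\<Sum>i<n. c i * Hform q n d a (\<xi> i) (\<phi> v))"
        using c(1) H_smult_left by simp
      also have "\<dots> = 0" using base by simp
      finally show "Hform q n d a x (\<phi> v) = 0" .
    qed
  qed
  have inj: "inj_on \<phi> KV"
  proof (rule inj_onI)
    fix u v assume u: "u \<in> KV" and v: "v \<in> KV" and e: "\<phi> u = \<phi> v"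
    have uc: "u \<in> carrier_vec n" and uK: "\<And>j. j < n \<Longrightarrow> (u $ j) ^ (q^2) = u $ j"
      using u unfolding KV_def by auto
    have vc: "v \<in> carrier_vec n" and vK: "\<And>j. j < n \<Longrightarrow> (v $ j) ^ (q^2) = v $ j"
      using v unfolding KV_def by auto
    define cu where "cu = (\<lambda>l. if l < n then (u $ l) ^ q else 0)"
    define cv where "cv = (\<lambda>l. if l < n then (v $ l) ^ q else 0)"
    have Pu: "(\<forall>i<n. cu i \<in> Ks) \<and> (\<forall>i\<ge>n. cu i = 0) \<and> \<phi> u = (\<Sum>i<n. cu i * \<xi> i)"
    proof (intro conjI allI impI)
      fix i assume i: "i < n"
      have "((u $ i) ^ q) ^ (q^2) = ((u $ i) ^ (q^2)) ^ q" by (simp add: power_mult[symmetric] mult.commute)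
      thus "cu i \<in> Ks" using uK[OF i] i by (simp add: cu_def)
    qed (auto simp: cu_def \<phi>_def)
    have Pv: "(\<forall>i<n. cv i \<in> Ks) \<and> (\<forall>i\<ge>n. cv i = 0) \<and> \<phi> u = (\<Sum>i<n. cv i * \<xi> i)"
    proof (intro conjI allI impI)
      fix i assume i: "i < n"
      have "((v $ i) ^ q) ^ (q^2) = ((v $ i) ^ (q^2)) ^ q" by (simp add: power_mult[symmetric] mult.commute)
      thus "cv i \<in> Ks" using vK[OF i] i by (simp add: cv_def)
    next
      fix i :: nat assume "n \<le> i" thus "cv i = 0" by (simp add: cv_def)
    next
      have "(\<Sum>i<n. cv i * \<xi> i) = \<phi> v" unfolding cv_def \<phi>_def by (intro sum.cong) auto
      thus "\<phi> u = (\<Sum>i<n. cv i * \<xi> i)" using e by simp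
    qed
    from ex1[of "\<phi> u"] obtain c where uq: "\<forall>y. ((\<forall>i<n. y i \<in> Ks) \<and> (\<forall>i\<ge>n. y i = 0) \<and> \<phi> u = (\<Sum>i<n. y i * \<xi> i)) \<longrightarrow> y = c"
      by (elim ex1E) blast
    have "cu = c" using uq Pu by blast
    moreover have "cv = c" using uq Pv by blast
    ultimately have cuv: "cu = cv" by simp
    show "u = v"
    proof (rule eq_vecI)
      fix i assume "i < dim_vec v"
      hence i: "i < n" using vc by simp
      have "(u $ i) ^ q = (v $ i) ^ q" using fun_cong[OF cuv, of i] i by (simp add: cu_def cv_def)
      hence "((u $ i) ^ q) ^ q = ((v $ i) ^ q) ^ q" by simp
      thus "u $ i = v $ i" using uK[OF i] vK[OF i] by (simp add: pqq)
    qed (use uc vc in simp)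
  qed
  have "card {v \<in> KV. M *\<^sub>v v = 0\<^sub>v n} \<le> card (Rad a)"
  proof (rule card_inj_on_le[where f = \<phi>])
    show "inj_on \<phi> {v \<in> KV. M *\<^sub>v v = 0\<^sub>v n}" using inj by (rule inj_on_subset) auto
    show "\<phi> ` {v \<in> KV. M *\<^sub>v v = 0\<^sub>v n} \<subseteq> Rad a" using rad by blast
    show "finite (Rad a)" by simp
  qed
  also have "\<dots> \<le> q ^ (2 * (n - d))" by (rule Rad_bound[where a = a, OF nz])
  finally have ker: "card {v \<in> KV. M *\<^sub>v v = 0\<^sub>v n} \<le> q ^ (2 * (n - d))" .
  have MK: "M $$ (i, j) \<in> Ks" if "i < n" "j < n" for i j
    using that H_in_K by (simp add: M_def FM_index)
  have "d \<le> vec_space.rank n M"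
    by (rule rank_bound[OF FM_carrier[of \<xi> a, folded M_def] MK bas ker dn])
  thus ?thesis unfolding mrank_def M_def .
qed

end


lemma prod_if0: "(\<Prod>k\<le>J. if k = 0 then A else B) = (A::nat) * B ^ J"
  by (induction J) (simp_all add: atMost_Suc mult_ac)

context ffd begin

lemma mrank_zero: "mrank n (0\<^sub>m n n :: 'a mat) = 0"
  unfolding mrank_def by (rule vec_space.rank_0I)

lemma main:
  assumes bas: "is_basis q n \<xi>"
  shows "(\<forall>a\<in>{a :: nat \<Rightarrow> 'a. a 0 \<in> subfield_of_order (q ^ n)}. hermitian_form q (Hform q n d a))
       \<and> d_code n q d ((\<lambda>a. form_matrix n \<xi> (Hform q n d a)) ` {a :: nat \<Rightarrow> 'a. a 0 \<in> subfield_of_order (q ^ n)})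
       \<and> additive_code n ((\<lambda>a. form_matrix n \<xi> (Hform q n d a)) ` {a :: nat \<Rightarrow> 'a. a 0 \<in> subfield_of_order (q ^ n)})
       \<and> card ((\<lambda>a. form_matrix n \<xi> (Hform q n d a)) ` {a :: nat \<Rightarrow> 'a. a 0 \<in> subfield_of_order (q ^ n)}) = q ^ (n * (n - d + 1))"
proof -
  define P where "P = {a :: nat \<Rightarrow> 'a. a 0 ^ (q ^ n) = a 0}"
  have Peq: "{a :: nat \<Rightarrow> 'a. a 0 \<in> subfield_of_order (q ^ n)} = P"
    unfolding P_def subfield_of_order_def by simp
  have FMeq: "(\<lambda>a. form_matrix n \<xi> (Hform q n d a)) = FM \<xi>"
    unfolding FM_def by (rule ext) simp
  define Y where "Y = FM \<xi> ` P"
  have zP: "(\<lambda>k. 0::'a) \<in> P" unfolding P_def using q_ge2 by simp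
  have diffP: "(\<lambda>k. a k - b k) \<in> P" if "a \<in> P" "b \<in> P" for a b
    using that unfolding P_def by (simp add: frob_diff)
  have addP: "(\<lambda>k. a k + b k) \<in> P" if "a \<in> P" "b \<in> P" for a b
    using that unfolding P_def by (simp add: frob_add)
  have negP: "(\<lambda>k. - a k) \<in> P" if "a \<in> P" for a
    using that unfolding P_def by (simp add: frob_neg)
  have herm: "\<forall>a\<in>P. hermitian_form q (Hform q n d a)"
    using herm_form unfolding P_def by blast
  have rk: "d \<le> mrank n (FM \<xi> a - FM \<xi> b)" if a: "a \<in> P" and b: "b \<in> P" and k0: "k0 \<le> J" "a k0 \<noteq> b k0" for a b k0
  proof -
    have cP: "(\<lambda>k. a k - b k) \<in> P" by (rule diffP[OF a b])
    hence c0: "(\<lambda>k. a k - b k) 0 ^ (q ^ n) = (\<lambda>k. a k - b k) 0" unfolding P_def by simp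
    have "d \<le> mrank n (FM \<xi> (\<lambda>k. a k - b k))"
      by (rule rank_FM[where a = "\<lambda>k. a k - b k", OF c0 k0(1) _ bas]) (use k0 in simp)
    thus ?thesis by (simp add: FM_diff)
  qed
  have dcode: "d_code n q d Y"
    unfolding d_code_def
  proof (intro conjI ballI impI)
    show "Y \<noteq> {}" unfolding Y_def using zP by blast
    show "Y \<subseteq> hermitian_mats n q" unfolding Y_def P_def using FM_herm by blast
    fix A B assume A: "A \<in> Y" and B: "B \<in> Y" and AB: "A \<noteq> B"
    obtain a where a: "a \<in> P" "A = FM \<xi> a" using A unfolding Y_def by blast
    obtain b where b: "b \<in> P" "B = FM \<xi> b" using B unfolding Y_def by blast
    have "\<exists>k0\<le>J. a k0 \<noteq> b k0"
    proof (rule ccontr)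
      assume "\<not> (\<exists>k0\<le>J. a k0 \<noteq> b k0)"
      hence "\<And>k. k \<le> J \<Longrightarrow> a k = b k" by blast
      hence "FM \<xi> a = FM \<xi> b" by (rule FM_cong)
      thus False using AB a b by simp
    qed
    then obtain k0 where "k0 \<le> J" "a k0 \<noteq> b k0" by blast
    thus "d \<le> mrank n (A - B)" using rk[OF a(1) b(1)] a b by simp
  qed
  have acode: "additive_code n Y"
    unfolding additive_code_def
  proof (intro conjI ballI)
    show "0\<^sub>m n n \<in> Y" unfolding Y_def using zP FM_zero[of \<xi>] by (metis image_eqI)
  next
    fix A B assume A: "A \<in> Y" and B: "B \<in> Y"
    obtain a where a: "a \<in> P" "A = FM \<xi> a" using A unfolding Y_def by blast
    obtain b where b: "b \<in> P" "B = FM \<xi> b" using B unfolding Y_def by blast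
    have "A + B = FM \<xi> (\<lambda>k. a k + b k)" using a b by (simp add: FM_add)
    thus "A + B \<in> Y" unfolding Y_def using addP[OF a(1) b(1)] by blast
  next
    fix A assume A: "A \<in> Y"
    obtain a where a: "a \<in> P" "A = FM \<xi> a" using A unfolding Y_def by blast
    have "- A = FM \<xi> (\<lambda>k. - a k)" using a by (simp add: FM_neg)
    thus "- A \<in> Y" unfolding Y_def using negP[OF a(1)] by blast
  qed
  define P' where "P' = {a \<in> P. \<forall>k>J. a k = 0}"
  have YP': "Y = FM \<xi> ` P'"
  proof
    show "FM \<xi> ` P' \<subseteq> Y" unfolding Y_def P'_def by blast
    show "Y \<subseteq> FM \<xi> ` P'"
    proof
      fix A assume "A \<in> Y"
      then obtain a where a: "a \<in> P" "A = FM \<xi> a" unfolding Y_def by blast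
      define t where "t = (\<lambda>k. if k \<le> J then a k else 0)"
      have "t \<in> P'" using a(1) unfolding t_def P'_def P_def by simp
      moreover have "FM \<xi> a = FM \<xi> t" by (rule FM_cong) (simp add: t_def)
      ultimately show "A \<in> FM \<xi> ` P'" using a by blast
    qed
  qed
  have inj: "inj_on (FM \<xi>) P'"
  proof (rule inj_onI)
    fix a b assume a: "a \<in> P'" and b: "b \<in> P'" and e: "FM \<xi> a = FM \<xi> b"
    show "a = b"
    proof (rule ccontr)
      assume "a \<noteq> b"
      then obtain k where k: "a k \<noteq> b k" by blast
      have kJ: "k \<le> J"
      proof (rule ccontr)
        assume "\<not> k \<le> J"
        hence "a k = 0" "b k = 0" using a b unfolding P'_def by auto
        thus False using k by simp
      qed
      have "d \<le> mrank n (FM \<xi> a - FM \<xi> b)"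
        by (rule rk[where a = a and b = b, OF _ _ kJ k]) (use a b P'_def in auto)
      also have "FM \<xi> a - FM \<xi> b = 0\<^sub>m n n"
        using e by (intro eq_matI) (simp_all add: FM_dims)
      finally show False using mrank_zero d1 by simp
    qed
  qed
  define Kn where "Kn = {x::'a. x ^ (q ^ n) = x}"
  define B where "B = (\<lambda>k::nat. if k = 0 then Kn else (UNIV :: 'a set))"
  define ext where "ext = (\<lambda>f::nat \<Rightarrow> 'a. \<lambda>k. if k \<le> J then f k else 0)"
  have bij: "bij_betw ext (PiE {..J} B) P'"
  proof -
    have "inj_on ext (PiE {..J} B)"
    proof (rule inj_onI)
      fix f g assume f: "f \<in> PiE {..J} B" and g: "g \<in> PiE {..J} B" and e: "ext f = ext g"
      show "f = g"
      proof (rule PiE_ext[OF f g])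
        fix k assume "k \<in> {..J}"
        hence "k \<le> J" by simp
        thus "f k = g k" using fun_cong[OF e, of k] by (simp add: ext_def)
      qed
    qed
    moreover have "ext ` (PiE {..J} B) = P'"
    proof
      show "ext ` (PiE {..J} B) \<subseteq> P'"
      proof
        fix a assume "a \<in> ext ` (PiE {..J} B)"
        then obtain f where f: "f \<in> PiE {..J} B" and a: "a = ext f" by blast
        have "f 0 \<in> B 0" using PiE_mem[OF f, of 0] by simp
        hence "f 0 ^ (q ^ n) = f 0" by (simp add: B_def Kn_def)
        thus "a \<in> P'" unfolding a P'_def P_def ext_def by simp
      qed
      show "P' \<subseteq> ext ` (PiE {..J} B)"
      proof
        fix a assume a: "a \<in> P'"
        have "a = ext (restrict a {..J})" using a unfolding ext_def P'_def by (intro ext) auto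
        moreover have "restrict a {..J} \<in> PiE {..J} B"
          using a unfolding B_def Kn_def P'_def P_def by auto
        ultimately show "a \<in> ext ` (PiE {..J} B)" by blast
      qed
    qed
    ultimately show ?thesis unfolding bij_betw_def by blast
  qed
  have cKn: "card Kn = q ^ n" unfolding Kn_def using card_subfield[of n 2] npos by (simp add: mult.commute)
  have "card P' = card (PiE {..J} B)" using bij_betw_same_card[OF bij] by simp
  also have "\<dots> = (\<Prod>k\<le>J. card (B k))" by (rule card_PiE) simp
  also have "\<dots> = (\<Prod>k\<le>J. if k = 0 then q ^ n else q ^ (2 * n))"
    by (rule prod.cong) (auto simp: B_def cKn card_a)
  also have "\<dots> = q ^ n * (q ^ (2 * n)) ^ J" by (rule prod_if0)
  also have "\<dots> = q ^ (n * (n - d + 1))"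
  proof -
    have "n - d + 1 = 2 * J + 1" using dJ dn by simp
    hence e: "n * (n - d + 1) = n + 2 * n * J" by (simp add: algebra_simps)
    have "q ^ n * (q ^ (2 * n)) ^ J = q ^ n * q ^ (2 * n * J)" by (simp only: power_mult)
    also have "\<dots> = q ^ (n + 2 * n * J)" by (simp only: power_add)
    finally show ?thesis by (simp only: e)
  qed
  finally have cP': "card P' = q ^ (n * (n - d + 1))" .
  have cY: "card Y = q ^ (n * (n - d + 1))"
    unfolding YP' using card_image[OF inj] cP' by simp
  show ?thesis unfolding Peq FMeq Y_def[symmetric] using herm dcode acode cY by blast
qed

end

theorem theorem4p2:
  fixes q n d :: nat and \<xi> :: "nat \<Rightarrow> 'a::{field,finite}"
  assumes "prime_power q"
    and "odd n" and "odd d" and "1 \<le> d" and "d \<le> n"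
    and "card (UNIV :: 'a set) = q ^ (2 * n)"
    and "is_basis q n \<xi>"
  defines "P \<equiv> {a :: nat \<Rightarrow> 'a. a 0 \<in> subfield_of_order (q ^ n)}"
  shows "(\<forall>a\<in>P. hermitian_form q (Hform q n d a))
       \<and> d_code n q d ((\<lambda>a. form_matrix n \<xi> (Hform q n d a)) ` P)
       \<and> additive_code n ((\<lambda>a. form_matrix n \<xi> (Hform q n d a)) ` P)
       \<and> card ((\<lambda>a. form_matrix n \<xi> (Hform q n d a)) ` P) = q ^ (n * (n - d + 1))"
proof -
  have n1: "n \<ge> 1" using assms(2) by (cases n) auto
  interpret ffd q n "TYPE('a)" d
    by unfold_locales (use assms n1 in auto)
  show ?thesis unfolding P_def by (rule main[OF assms(7)])
qed


end
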